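(* Let $k\ge 1$, $b\ge 0$ and $s$ be integers with $1\le s<k$. Then for every integer $t$, $$\sigma_{k}^{(b)}(t;s+1)=\sigma_{k}^{(b)}(t;s)-\sigma_{k}^{(b)}(t-s;s).$$
   Context: For a positive integer $m$, $(q)_m=(1-q)\cdots(1-q^m)$, $(q)_0=1$. For integers $b\ge 0$, $k\ge1$ and $1\le s\le k$, let $R^{(b)}_{k,s}(q)=\sum_{t=0}^{k-1}\sigma^{(b)}_k(t;s)q^t$ be the remainder of $\frac{1}{k^b}(q)_{k-1}^{\,b}(q)_{s-1}$ upon division by $1-q^k$. The values $\sigma^{(b)}_k(t;s)$ are extended to all integers $t$ by $k$-periodicity in $t$. *)

theory Defs
  imports "HOL-Computational_Algebra.Polynomial"
begin

definition qpoch :: "nat \<Rightarrow> rat poly" where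
  "qpoch m = (\<Prod>i\<in>{1..m}. 1 - monom 1 i)"

definition Rpoly :: "nat \<Rightarrow> nat \<Rightarrow> nat \<Rightarrow> rat poly" where
  "Rpoly b k s = (smult (1 / of_nat k ^ b) (qpoch (k - 1) ^ b * qpoch (s - 1))) mod (1 - monom 1 k)"

definition sigma :: "nat \<Rightarrow> nat \<Rightarrow> int \<Rightarrow> nat \<Rightarrow> rat" where
  "sigma b k t s = coeff (Rpoly b k s) (nat (t mod int k))"

end

theory Submission
  imports Defs
begin

lemma degree_M: "1 \<le> k \<Longrightarrow> degree (1 - monom (1::rat) k) = k"
proof -
  assume k: "1 \<le> k"
  have "1 - monom (1::rat) k = monom (-1) k + 1" by (simp add: monom_altdef)
  also have "degree \<dots> = k" using k
    by (subst degree_add_eq_left) (auto simp: degree_monom_eq)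
  finally show ?thesis .
qed

lemma rot_mod:
  fixes r :: "rat poly"
  assumes k: "1 \<le> k" and s: "s < k" and dr: "degree r < k" and j: "j < k"
  shows "coeff ((monom 1 s * r) mod (1 - monom 1 k)) j =
    (if s \<le> j then coeff r (j - s) else coeff r (j + k - s))"
proof -
  define lo where "lo = poly_cutoff (k - s) r"
  define hi where "hi = poly_shift (k - s) r"
  have rdec: "r = lo + monom 1 (k - s) * hi"
    unfolding lo_def hi_def
    by (auto simp: poly_eq_iff coeff_poly_cutoff coeff_poly_shift coeff_monom_mult)
  have "monom 1 s * r = monom 1 s * lo + monom 1 k * hi"
    using s by (subst rdec) (simp add: algebra_simps mult_monom)
  also have "\<dots> = (monom 1 s * lo + hi) + (- hi) * (1 - monom 1 k)"
    by (simp add: algebra_simps)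
  finally have e0: "(monom 1 s * r) mod (1 - monom 1 k) = ((monom 1 s * lo + hi) + (- hi) * (1 - monom 1 k)) mod (1 - monom 1 k)"
    by (simp only:)
  have e: "(monom 1 s * r) mod (1 - monom 1 k) = (monom 1 s * lo + hi) mod (1 - monom 1 k)"
    unfolding e0 by (rule mod_mult_self1)
  have cr: "coeff r i = 0" if "i \<ge> k" for i using dr that by (intro coeff_eq_0) simp
  have "degree (monom 1 s * lo + hi) \<le> k - 1"
  proof (rule degree_le, intro allI impI)
    fix i assume "k - 1 < i"
    then show "coeff (monom 1 s * lo + hi) i = 0"
      using s cr unfolding lo_def hi_def
      by (auto simp: coeff_poly_cutoff coeff_poly_shift coeff_monom_mult)
  qed
  then have "(monom 1 s * lo + hi) mod (1 - monom 1 k) = monom 1 s * lo + hi"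
    using k by (intro mod_poly_less) (simp add: degree_M)
  with e have "(monom 1 s * r) mod (1 - monom 1 k) = monom 1 s * lo + hi" by simp
  then show ?thesis
    using s j cr unfolding lo_def hi_def
    by (auto simp: coeff_poly_cutoff coeff_poly_shift coeff_monom_mult)
qed

theorem theorem2p2:
  fixes k b s :: nat and t :: int
  assumes "1 \<le> k" and "1 \<le> s" and "s < k"
  shows "sigma b k t (s + 1) = sigma b k t s - sigma b k (t - int s) s"
proof -
  define M :: "rat poly" where "M = 1 - monom 1 k"
  define A where "A = smult (1 / of_nat k ^ b) (qpoch (k - 1) ^ b * qpoch (s - 1))"
  have qs: "qpoch s = qpoch (s - 1) * (1 - monom 1 s)"
  proof -
    have "{1..s} = insert s {1..s-1}" using assms by auto
    then show ?thesis unfolding qpoch_def by (simp only:) (subst prod.insert, auto simp: mult.commute)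
  qed
  have A': "smult (1 / of_nat k ^ b) (qpoch (k - 1) ^ b * qpoch (s + 1 - 1)) = A - monom 1 s * A"
    unfolding A_def by (simp add: qs algebra_simps smult_diff_right)
  have R1: "Rpoly b k (s + 1) = A mod M - (monom 1 s * (A mod M)) mod M"
    unfolding Rpoly_def A' M_def[symmetric] by (simp add: poly_mod_diff_left mod_mult_right_eq)
  have R0: "Rpoly b k s = A mod M" unfolding Rpoly_def A_def M_def by simp
  have dr: "degree (A mod M) < k"
  proof (cases "A mod M = 0")
    case True then show ?thesis using assms by simp
  next
    case False
    have "M \<noteq> 0" using degree_M[OF assms(1)] assms unfolding M_def by auto
    then show ?thesis using degree_mod_less'[OF _ False] degree_M[OF assms(1)] M_def by auto
  qed
  define j where "j = nat (t mod int k)"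
  have j: "j < k" using assms unfolding j_def by (simp add: nat_less_iff)
  have jj: "nat ((t - int s) mod int k) = (if s \<le> j then j - s else j + k - s)"
  proof -
    have tj: "t mod int k = int j" using assms unfolding j_def by simp
    have "(t - int s) mod int k = (int j - int s) mod int k"
      by (metis tj mod_diff_left_eq)
    also have "\<dots> = (if s \<le> j then int (j - s) else int (j + k - s))"
    proof (cases "s \<le> j")
      case True then show ?thesis using assms j by (simp add: of_nat_diff mod_pos_pos_trivial)
    next
      case False
      have "(int j - int s) mod int k = (int j - int s + int k) mod int k" by simp
      also have "\<dots> = int j - int s + int k" using False assms j by (intro mod_pos_pos_trivial) auto
      finally show ?thesis using False assms by (simp add: of_nat_diff)
    qed
    finally show ?thesis by (simp add: nat_diff_distrib)
  qed
  show ?thesis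
    unfolding sigma_def R1 R0 j_def[symmetric] jj
    using rot_mod[OF assms(1) assms(3) dr j] unfolding M_def by simp
qed

end
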